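(* Let $\ell,m$ be positive integers and let $\mu\in\mathcal{P}^{\ell,\ell+m-1}$. Define $\tilde\mu:[\ell]\to[\ell]$ by $\tilde\mu(i)=t(i,\mu(i))$, where $t(r,s)=s$ if $s<r$, $t(r,s)=r$ if $r\leq s\leq m+r-1$, and $t(r,s)=s-m+1$ if $s>m+r-1$. Then $\mu\in\mathcal{P}^\ell(\Omega_m)$ if and only if for every $i\in[\ell]$: (i) if $\tilde\mu(i)>i$ then $\tilde\mu(\tilde\mu(i))>i$; (ii) if $\tilde\mu(i)<i$ then $\tilde\mu(\tilde\mu(i))<i$.
   Context: For a positive integer $n$, $[n]=\{1,\dots,n\}$. $\mathcal{P}^{n,k}$ is the set of partitions $\mu=(\mu_1\geq\dots\geq\mu_n>0)$ with exactly $n$ parts and $\mu_1\leq k$, regarded as weakly decreasing functions $[n]\to[k]$, $\mu(i)=\mu_i$. The map $\tau_k:\mathcal{P}^{n,k}\to\mathcal{P}^{n,k}$ is $\tau_k(\mu_1,\dots,\mu_n)=(k+1-\mu_n,\dots,k+1-\mu_1)$. For $\mu$ with $n-1$ parts and $0<j\leq\mu_{n-1}$, $(\mu:j)$ denotes the partition $(\mu_1,\dots,\mu_{n-1},j)$. Fix $m\in\mathbb{Z}^+$ and let $\Omega_m=\{(j):1\leq j\leq m\}=\mathcal{P}^{1,m}$. Define $\mathcal{P}^1(\Omega_m)=\Omega_m$ and, for $\ell\geq2$, $\mathcal{P}^\ell_{\rm d}(\Omega_m)=\{(\nu:j)\in\mathcal{P}^{\ell,\ell+m-1}:\nu\in\mathcal{P}^{\ell-1}(\Omega_m),\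 1\leq j\leq\nu_{\ell-1}\}$ and $\mathcal{P}^\ell(\Omega_m)=\mathcal{P}^\ell_{\rm d}(\Omega_m)\cup\tau_{\ell+m-1}(\mathcal{P}^\ell_{\rm d}(\Omega_m))$. *)

theory Defs
  imports Main
begin

(* A partition mu = (mu_1 >= ... >= mu_n > 0) is represented as the list [mu_1,...,mu_n];
   mu(i) = mu ! (i - 1) for i in {1..n}. *)

definition Pnk :: "nat \<Rightarrow> nat \<Rightarrow> nat list set" where
  "Pnk n k = {mu. length mu = n \<and> sorted_wrt (\<ge>) mu \<and> (\<forall>x\<in>set mu. 0 < x \<and> x \<le> k)}"

definition tau :: "nat \<Rightarrow> nat list \<Rightarrow> nat list" where
  "tau k mu = rev (map (\<lambda>x. k + 1 - x) mu)"

definition Omega :: "nat \<Rightarrow> nat list set" where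
  "Omega m = {[j] | j. 1 \<le> j \<and> j \<le> m}"

fun POm :: "nat \<Rightarrow> nat \<Rightarrow> nat list set" where
  "POm m 0 = {}"
| "POm m (Suc 0) = Omega m"
| "POm m (Suc (Suc l)) =
     (let L = Suc (Suc l);
          D = {nu @ [j] | nu j. nu \<in> POm m (Suc l) \<and> 1 \<le> j \<and> j \<le> last nu
                                \<and> nu @ [j] \<in> Pnk L (L + m - 1)}
      in D \<union> tau (L + m - 1) ` D)"

definition tfun :: "nat \<Rightarrow> nat \<Rightarrow> nat \<Rightarrow> nat" where
  "tfun m r s = (if s < r then s else if s \<le> m + r - 1 then r else s - m + 1)"

definition mutilde :: "nat \<Rightarrow> nat list \<Rightarrow> nat \<Rightarrow> nat" where
  "mutilde m mu i = tfun m i (mu ! (i - 1))"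

end

theory Submission
  imports Defs
begin

definition Cc :: "nat \<Rightarrow> nat \<Rightarrow> nat list \<Rightarrow> bool" where
  "Cc m l mu = (\<forall>i\<in>{1..l}.
       (mutilde m mu i > i \<longrightarrow> mutilde m mu (mutilde m mu i) > i) \<and>
       (mutilde m mu i < i \<longrightarrow> mutilde m mu (mutilde m mu i) < i))"

lemma tfun_range:
  "1 \<le> i \<Longrightarrow> i \<le> l \<Longrightarrow> 0 < s \<Longrightarrow> s \<le> l+m-1 \<Longrightarrow> 0<m \<Longrightarrow> 1 \<le> tfun m i s \<and> tfun m i s \<le> l"
  unfolding tfun_def by auto

lemma mt_range:
  assumes "mu \<in> Pnk l (l+m-1)" "0<m" "1 \<le> i" "i \<le> l"
  shows "1 \<le> mutilde m mu i \<and> mutilde m mu i \<le> l"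
proof -
  have "mu ! (i-1) \<in> set mu" using assms unfolding Pnk_def by auto
  then have "0 < mu!(i-1) \<and> mu!(i-1) \<le> l+m-1" using assms(1) unfolding Pnk_def by auto
  then show ?thesis unfolding mutilde_def using tfun_range assms by auto
qed

lemma mt_butlast:
  assumes "length mu = l" "1 \<le> i" "i < l"
  shows "mutilde m (butlast mu) i = mutilde m mu i"
  unfolding mutilde_def using assms by (simp add: nth_butlast)

lemma tfun_tau:
  "1\<le>i \<Longrightarrow> i\<le>l \<Longrightarrow> 0<s \<Longrightarrow> s\<le>l+m-1 \<Longrightarrow> 0<m \<Longrightarrow>
   tfun m i (l+m-1+1-s) = l+1 - tfun m (l+1-i) s"
  unfolding tfun_def by auto

lemma mt_tau:
  assumes "mu \<in> Pnk l (l+m-1)" "0<m" "1 \<le> i" "i \<le> l"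
  shows "mutilde m (tau (l+m-1) mu) i = l+1 - mutilde m mu (l+1-i)"
proof -
  have len: "length mu = l" using assms unfolding Pnk_def by auto
  have e: "tau (l+m-1) mu ! (i-1) = l+m-1+1 - mu!(l-i)"
    unfolding tau_def using assms len by (simp add: rev_nth)
  have "mu ! (l-i) \<in> set mu" using assms len by auto
  then have "0 < mu!(l-i) \<and> mu!(l-i) \<le> l+m-1" using assms(1) unfolding Pnk_def by auto
  moreover have "l+1-i-1 = l-i" by simp
  ultimately show ?thesis unfolding mutilde_def e using tfun_tau assms by auto
qed

lemma tau_Pnk:
  assumes "mu \<in> Pnk l K" shows "tau K mu \<in> Pnk l K"
  using assms unfolding Pnk_def tau_def
  by (auto simp: sorted_wrt_rev sorted_wrt_map elim!: sorted_wrt_mono_rel[rotated])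

lemma tau_tau:
  assumes "mu \<in> Pnk l K" shows "tau K (tau K mu) = mu"
proof -
  have "\<forall>x\<in>set mu. x \<le> K" using assms unfolding Pnk_def by auto
  then show ?thesis unfolding tau_def by (auto simp: rev_map intro!: map_idI)
qed

lemma Pnk_le0:
  assumes "mu \<in> Pnk l K" "i < l" shows "mu ! i \<le> mu ! 0"
  using assms unfolding Pnk_def
  by (cases i) (auto simp: sorted_wrt_iff_nth_less)

lemma lemB:
  assumes mu: "mu \<in> Pnk l (l+m-1)" and l2: "2 \<le> l" and m: "0<m"
    and h0: "mu!0 \<le> l+m-2"
  shows "Cc m (l-1) (butlast mu) \<longleftrightarrow> Cc m l mu"
proof -
  let ?f = "mutilde m mu"
  have len: "length mu = l" using mu unfolding Pnk_def by auto
  have bnd: "?f i < l" if "1 \<le> i" "i < l" for i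
  proof -
    have "mu!(i-1) \<le> mu!0" using Pnk_le0[OF mu] that by auto
    then have "mu!(i-1) \<le> l+m-2" using h0 by auto
    then show ?thesis using that unfolding mutilde_def tfun_def by auto
  qed
  have rng: "1 \<le> ?f i \<and> ?f i \<le> l" if "1 \<le> i" "i \<le> l" for i
    using mt_range[OF mu m that] .
  have gf: "mutilde m (butlast mu) i = ?f i" if "1 \<le> i" "i < l" for i
    using mt_butlast[OF len that] .
  have P: "(mutilde m (butlast mu) i > i \<longrightarrow> mutilde m (butlast mu) (mutilde m (butlast mu) i) > i) \<and>
       (mutilde m (butlast mu) i < i \<longrightarrow> mutilde m (butlast mu) (mutilde m (butlast mu) i) < i)
     \<longleftrightarrow> (?f i > i \<longrightarrow> ?f (?f i) > i) \<and> (?f i < i \<longrightarrow> ?f (?f i) < i)"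
    if "1 \<le> i" "i < l" for i
  proof -
    have "mutilde m (butlast mu) (mutilde m (butlast mu) i) = ?f (?f i)"
      using gf[OF that] gf[of "?f i"] rng[of i] bnd[OF that] that by auto
    then show ?thesis using gf[OF that] by simp
  qed
  have last: "(?f l > l \<longrightarrow> ?f (?f l) > l) \<and> (?f l < l \<longrightarrow> ?f (?f l) < l)"
  proof -
    have "?f l \<le> l" using rng[of l] l2 by auto
    moreover have "?f l < l \<Longrightarrow> ?f (?f l) < l"
      using bnd[of "?f l"] rng[of l] l2 by auto
    ultimately show ?thesis by auto
  qed
  show ?thesis
  proof
    assume A: "Cc m (l-1) (butlast mu)"
    show "Cc m l mu" unfolding Cc_def
    proof
      fix i assume i: "i \<in> {1..l}"
      show "(?f i > i \<longrightarrow> ?f (?f i) > i) \<and> (?f i < i \<longrightarrow> ?f (?f i) < i)"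
      proof (cases "i = l")
        case True then show ?thesis using last by simp
      next
        case False
        then have "1 \<le> i" "i < l" using i by auto
        moreover have "i \<in> {1..l-1}" using calculation by auto
        ultimately show ?thesis using A P unfolding Cc_def by blast
      qed
    qed
  next
    assume A: "Cc m l mu"
    show "Cc m (l-1) (butlast mu)" unfolding Cc_def
    proof
      fix i assume i: "i \<in> {1..l-1}"
      then have "1 \<le> i" "i < l" using l2 by auto
      moreover have "i \<in> {1..l}" using calculation by auto
      ultimately show "(mutilde m (butlast mu) i > i \<longrightarrow> mutilde m (butlast mu) (mutilde m (butlast mu) i) > i) \<and>
       (mutilde m (butlast mu) i < i \<longrightarrow> mutilde m (butlast mu) (mutilde m (butlast mu) i) < i)"
        using A P unfolding Cc_def by blast
    qed
  qed
qed


lemma lemE: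
  assumes mu: "mu \<in> Pnk l (l+m-1)" and l2: "2 \<le> l" and m: "0<m" and C: "Cc m l mu"
  shows "mu!0 \<le> l+m-2 \<or> tau (l+m-1) mu ! 0 \<le> l+m-2"
proof (rule ccontr)
  assume "\<not> ?thesis"
  then have a: "mu!0 > l+m-2" "tau (l+m-1) mu ! 0 > l+m-2" by auto
  have len: "length mu = l" using mu unfolding Pnk_def by auto
  have s0: "mu!0 \<le> l+m-1" "mu!(l-1) > 0" using mu len l2 unfolding Pnk_def by auto
  have t0: "tau (l+m-1) mu ! 0 = l+m-1+1 - mu!(l-1)"
    unfolding tau_def using len l2 by (simp add: rev_nth)
  have e1: "mu!0 = l+m-1" using a s0 by auto
  have e2: "mu!(l-1) = 1" using a(2) t0 s0 by auto
  have f1: "mutilde m mu 1 = l" unfolding mutilde_def tfun_def using e1 l2 m by auto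
  have fl: "mutilde m mu l = 1" unfolding mutilde_def tfun_def using e2 l2 by auto
  have "1 \<in> {1..l}" using l2 by auto
  then have "mutilde m mu 1 > 1 \<longrightarrow> mutilde m mu (mutilde m mu 1) > 1"
    using C unfolding Cc_def by blast
  then show False using f1 fl l2 by auto
qed

lemma arith_lem:
  fixes a b i j l :: nat
  shows "1\<le>j \<Longrightarrow> j\<le>l \<Longrightarrow> 1\<le>a \<Longrightarrow> a\<le>l \<Longrightarrow> 1\<le>b \<Longrightarrow> b\<le>l \<Longrightarrow>
  (a>j \<longrightarrow> b>j) \<and> (a<j \<longrightarrow> b<j) \<Longrightarrow> i = l+1-j \<Longrightarrow>
  (l+1-a > i \<longrightarrow> l+1-b > i) \<and> (l+1-a < i \<longrightarrow> l+1-b < i)"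
  by linarith

lemma lemTau:
  assumes mu: "mu \<in> Pnk l (l+m-1)" and m: "0<m" and C: "Cc m l mu"
  shows "Cc m l (tau (l+m-1) mu)"
  unfolding Cc_def
proof
  fix i assume i: "i \<in> {1..l}"
  let ?f = "mutilde m mu" and ?g = "mutilde m (tau (l+m-1) mu)"
  define j where "j = l+1-i"
  have j: "j \<in> {1..l}" using i unfolding j_def by auto
  have gi: "?g i = l+1 - ?f j" using mt_tau[OF mu m] i unfolding j_def by auto
  have fj: "1 \<le> ?f j \<and> ?f j \<le> l" using mt_range[OF mu m] j by auto
  have ffj: "1 \<le> ?f (?f j) \<and> ?f (?f j) \<le> l" using mt_range[OF mu m] fj by auto
  have ggi: "?g (?g i) = l+1 - ?f (?f j)"
  proof -
    have "?g (?g i) = l+1 - ?f (l+1 - ?g i)" using mt_tau[OF mu m] gi fj by auto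
    also have "l+1 - ?g i = ?f j" using gi fj by auto
    finally show ?thesis .
  qed
  have Cj: "(?f j > j \<longrightarrow> ?f (?f j) > j) \<and> (?f j < j \<longrightarrow> ?f (?f j) < j)"
    using C j unfolding Cc_def by blast
  have ij: "i = l+1-j" using i unfolding j_def by auto
  show "(?g i > i \<longrightarrow> ?g (?g i) > i) \<and> (?g i < i \<longrightarrow> ?g (?g i) < i)"
  proof -
    have X: "(l+1-?f j > i \<longrightarrow> l+1-?f (?f j) > i) \<and> (l+1-?f j < i \<longrightarrow> l+1-?f (?f j) < i)"
      using arith_lem[OF _ _ _ _ _ _ Cj ij] fj ffj j by auto
    have ggi': "?g (l+1 - ?f j) = l+1 - ?f (?f j)" using ggi gi by simp
    show ?thesis using X by (simp only: gi ggi')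
  qed
qed

lemma Cc_tau_iff:
  assumes mu: "mu \<in> Pnk l (l+m-1)" and m: "0<m"
  shows "Cc m l (tau (l+m-1) mu) \<longleftrightarrow> Cc m l mu"
  using lemTau[OF mu m] lemTau[OF tau_Pnk[OF mu] m] tau_tau[OF mu] by auto

lemma POm_sub: "0 < m \<Longrightarrow> POm m l \<subseteq> Pnk l (l+m-1)"
proof (induction m l rule: POm.induct)
  case (1 m) then show ?case by simp
next
  case (2 m) then show ?case by (auto simp: Omega_def Pnk_def)
next
  case (3 m l)
  then show ?case using tau_Pnk by (auto simp: Let_def)
qed

lemma Dmem:
  assumes mu: "mu \<in> Pnk (Suc (Suc l)) K"
  shows "mu \<in> {nu @ [j] | nu j. nu \<in> POm m (Suc l) \<and> 1 \<le> j \<and> j \<le> last nu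
                                \<and> nu @ [j] \<in> Pnk (Suc (Suc l)) K}
     \<longleftrightarrow> butlast mu \<in> POm m (Suc l)"
proof
  assume "mu \<in> {nu @ [j] | nu j. nu \<in> POm m (Suc l) \<and> 1 \<le> j \<and> j \<le> last nu
                                \<and> nu @ [j] \<in> Pnk (Suc (Suc l)) K}"
  then show "butlast mu \<in> POm m (Suc l)" by auto
next
  assume b: "butlast mu \<in> POm m (Suc l)"
  have len: "length mu = Suc (Suc l)" using mu unfolding Pnk_def by auto
  then have ne: "mu \<noteq> []" by auto
  have dec: "mu = butlast mu @ [last mu]" using ne by simp
  have bne: "butlast mu \<noteq> []" using len by (cases mu rule: rev_cases) auto
  have srt: "sorted_wrt (\<ge>) mu" using mu unfolding Pnk_def by auto
  have sw: "sorted_wrt (\<ge>) (butlast mu @ [last mu])"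
    by (rule ssubst[where P="sorted_wrt (\<ge>)", OF dec[symmetric] srt])
  have "last (butlast mu) \<in> set (butlast mu)" using bne by simp
  then have j1: "last mu \<le> last (butlast mu)" using sw by (auto simp: sorted_wrt_append)
  have "last mu \<in> set mu" using ne by simp
  then have j0: "1 \<le> last mu" using mu unfolding Pnk_def by auto
  show "mu \<in> {nu @ [j] | nu j. nu \<in> POm m (Suc l) \<and> 1 \<le> j \<and> j \<le> last nu
                                \<and> nu @ [j] \<in> Pnk (Suc (Suc l)) K}"
  proof -
    have "mu = butlast mu @ [last mu] \<and> butlast mu \<in> POm m (Suc l) \<and> 1 \<le> last mu \<and> last mu \<le> last (butlast mu)
      \<and> butlast mu @ [last mu] \<in> Pnk (Suc (Suc l)) K"
      using b j0 j1 mu dec by (intro conjI) (assumption | simp only: dec[symmetric])+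
    then show ?thesis by blast
  qed
qed


lemma butlast_Pnk:
  assumes mu: "mu \<in> Pnk (Suc n) K" and n: "0 < n"
  shows "butlast mu \<in> Pnk n (K-1) \<longleftrightarrow> mu!0 \<le> K-1"
proof
  have len: "length mu = Suc n" using mu unfolding Pnk_def by auto
  assume "butlast mu \<in> Pnk n (K-1)"
  moreover have "butlast mu ! 0 = mu ! 0" using len n by (simp add: nth_butlast)
  moreover have "butlast mu ! 0 \<in> set (butlast mu)" using len n by simp
  ultimately show "mu!0 \<le> K-1" unfolding Pnk_def by auto
next
  assume h: "mu!0 \<le> K-1"
  have len: "length mu = Suc n" using mu unfolding Pnk_def by auto
  have srt: "sorted_wrt (\<ge>) mu" using mu unfolding Pnk_def by auto
  have "butlast mu = take n mu" using len by (simp add: butlast_conv_take)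
  then have s2: "sorted_wrt (\<ge>) (butlast mu)" using srt by (simp add: sorted_wrt_take)
  have el: "0 < x \<and> x \<le> K-1" if "x \<in> set (butlast mu)" for x
  proof -
    have x: "x \<in> set mu" using that in_set_butlastD by fast
    then obtain i where i: "i < Suc n" "x = mu ! i" using len by (auto simp: in_set_conv_nth)
    have "x \<le> mu ! 0" using Pnk_le0[OF mu i(1)] i by simp
    then show ?thesis using h x mu unfolding Pnk_def by auto
  qed
  show "butlast mu \<in> Pnk n (K-1)" unfolding Pnk_def using len s2 el by auto
qed

lemma main:
  "0 < m \<Longrightarrow> 0 < l \<Longrightarrow> mu \<in> Pnk l (l+m-1) \<Longrightarrow> (mu \<in> POm m l \<longleftrightarrow> Cc m l mu)"
proof (induction l arbitrary: mu)
  case 0 then show ?case by simp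
next
  case (Suc n)
  show ?case
  proof (cases n)
    case 0
    then have "mu \<in> Pnk 1 m" using Suc by simp
    then obtain j where j: "mu = [j]" "0 < j" "j \<le> m" unfolding Pnk_def
      by (auto simp: length_Suc_conv)
    have "mu \<in> POm m (Suc n)" using j 0 by (auto simp: Omega_def)
    moreover have "Cc m (Suc n) mu" using j 0 unfolding Cc_def mutilde_def tfun_def by auto
    ultimately show ?thesis by simp
  next
    case (Suc k)
    note IH = Suc.IH
    have m: "0 < m" using Suc.prems by simp
    define l where "l = Suc n"
    define K where "K = l + m - 1"
    have l2: "2 \<le> l" using Suc unfolding l_def by simp
    have mu: "mu \<in> Pnk l K" using Suc.prems unfolding l_def K_def by simp
    have tmu: "tau K mu \<in> Pnk l K" using tau_Pnk[OF mu] .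
    define D where "D = {nu @ [j] | nu j. nu \<in> POm m (Suc k) \<and> 1 \<le> j \<and> j \<le> last nu
                                \<and> nu @ [j] \<in> Pnk (Suc (Suc k)) (Suc (Suc k) + m - 1)}"
    have PO: "POm m l = D \<union> tau K ` D" unfolding l_def K_def D_def Suc by (simp add: Let_def)
    have DP: "D \<subseteq> Pnk l K" unfolding D_def l_def K_def Suc by auto
    have mem: "mu \<in> POm m l \<longleftrightarrow> mu \<in> D \<or> tau K mu \<in> D"
    proof
      assume "mu \<in> POm m l"
      then show "mu \<in> D \<or> tau K mu \<in> D" unfolding PO using tau_tau DP by auto
    next
      assume "mu \<in> D \<or> tau K mu \<in> D"
      then show "mu \<in> POm m l" unfolding PO using tau_tau[OF mu] by (metis UnI1 UnI2 image_eqI)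
    qed
    have Dm: "x \<in> D \<longleftrightarrow> butlast x \<in> POm m n" if "x \<in> Pnk l K" for x
      using Dmem[of x k "Suc (Suc k) + m - 1" m] that unfolding D_def l_def K_def Suc by simp
    have eK: "K - 1 = n + m - 1" "l + m - 2 = K - 1" unfolding K_def l_def by auto
    have step: "butlast x \<in> POm m n \<longleftrightarrow> x!0 \<le> K-1 \<and> Cc m l x" if x: "x \<in> Pnk l K" for x
    proof -
      have x': "x \<in> Pnk (Suc n) K" using x unfolding l_def .
      have "butlast x \<in> POm m n \<longleftrightarrow> butlast x \<in> Pnk n (K-1) \<and> Cc m n (butlast x)"
      proof
        assume a: "butlast x \<in> POm m n"
        then have b: "butlast x \<in> Pnk n (K-1)" using POm_sub[OF m] eK by auto
        then show "butlast x \<in> Pnk n (K-1) \<and> Cc m n (butlast x)"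
          using IH[OF m _, of "butlast x"] a eK Suc by auto
      next
        assume "butlast x \<in> Pnk n (K-1) \<and> Cc m n (butlast x)"
        then show "butlast x \<in> POm m n" using IH[OF m _, of "butlast x"] eK Suc by auto
      qed
      also have "\<dots> \<longleftrightarrow> x!0 \<le> K-1 \<and> Cc m n (butlast x)"
        using butlast_Pnk[OF x'] Suc by auto
      also have "\<dots> \<longleftrightarrow> x!0 \<le> K-1 \<and> Cc m l x"
        using lemB[of x l m] x l2 m eK unfolding K_def l_def by auto
      finally show ?thesis .
    qed
    have "mu \<in> POm m l \<longleftrightarrow> (mu!0 \<le> K-1 \<and> Cc m l mu) \<or> (tau K mu!0 \<le> K-1 \<and> Cc m l (tau K mu))"
      using mem Dm[OF mu] Dm[OF tmu] step[OF mu] step[OF tmu] by simp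
    also have "\<dots> \<longleftrightarrow> Cc m l mu"
      using Cc_tau_iff[of mu l m] lemE[of mu l m] mu m l2 eK unfolding K_def by auto
    finally show ?thesis unfolding l_def .
  qed
qed

theorem theorem3p6:
  fixes l m :: nat and mu :: "nat list"
  assumes "0 < l" and "0 < m" and "mu \<in> Pnk l (l + m - 1)"
  shows "mu \<in> POm m l \<longleftrightarrow>
    (\<forall>i\<in>{1..l}.
       (mutilde m mu i > i \<longrightarrow> mutilde m mu (mutilde m mu i) > i) \<and>
       (mutilde m mu i < i \<longrightarrow> mutilde m mu (mutilde m mu i) < i))"
  using main[OF assms(2,1,3)] unfolding Cc_def .

end
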